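(* Let $h,b>0$, $\rho=b/(h+b)$, cost $c(x,d)=h(x-d)^++b(d-x)^+$. For $\theta\in[0,1/2]$ let $F_{\theta,1}$ be the CDF of the uniform distribution on $[\theta,1]$, and let $\mathcal F_u=\{F_{\theta,1}:\theta\in[0,1/2]\}$. For a demand CDF $F$ let $C_F(x)=\mathbb{E}_{D\sim F}[c(x,D)]$ and $x_F^*=\arg\min_xC_F(x)$. An admissible policy $\pi=(\pi_t)_{t\ge1}$ maps, in period $t$, the history of $t$ i.i.d. demand samples $(d_1,\dots,d_t)$ from $F$ to an order quantity $x_t^\pi$; let $\Pi$ be the set of admissible policies and $\mathcal R^\pi(F,T)=\sum_{t=1}^T\mathbb{E}[C_F(x_t^\pi)-C_F(x_F^* )]$. Then for every $T\ge1$, $$\inf_{\pi\in\Pi}\sup_{F\in\mathcal F_u}\mathcal R^\pi(F,T)\le(\rho^2+(1-\rho)^2)(h+b).$$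
   Context: Data-driven repeated newsvendor problem with linear overage cost $h$ and underage cost $b$; expectations are over demand samples and any randomness of the policy. *)

theory Defs
  imports "HOL-Probability.Probability"
begin

definition nv_cost :: "real \<Rightarrow> real \<Rightarrow> real \<Rightarrow> real \<Rightarrow> real" where
  "nv_cost h b x d = h * max (x - d) 0 + b * max (d - x) 0"

definition unif_dist :: "real \<Rightarrow> real measure" where
  "unif_dist \<theta> = uniform_measure lborel {\<theta>..1}"

definition exp_cost :: "real \<Rightarrow> real \<Rightarrow> real measure \<Rightarrow> real \<Rightarrow> real" where
  "exp_cost h b F x = (\<integral>d. nv_cost h b x d \<partial>F)"

text \<open>Optimal expected cost C_F(x_F^*) = min_x C_F(x) (the minimum is attained).\<close>
definition opt_cost :: "real \<Rightarrow> real \<Rightarrow> real measure \<Rightarrow> real" where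
  "opt_cost h b F = (INF x. exp_cost h b F x)"

text \<open>Admissible (deterministic, measurable) policies: in period t the order quantity
  is a measurable function of the samples d_1..d_t, stored at indices 0..t-1.\<close>
definition admissible :: "(nat \<Rightarrow> (nat \<Rightarrow> real) \<Rightarrow> real) \<Rightarrow> bool" where
  "admissible \<pi> \<longleftrightarrow> (\<forall>t\<ge>1. \<pi> t \<in> borel_measurable (PiM {..<t} (\<lambda>_. borel)))"

text \<open>Cumulative regret over T periods, samples i.i.d. from F. The instantaneous
  regret is nonnegative, so it is expressed as a nonnegative integral.\<close>
definition regret :: "real \<Rightarrow> real \<Rightarrow> (nat \<Rightarrow> (nat \<Rightarrow> real) \<Rightarrow> real) \<Rightarrow> real measure \<Rightarrow> nat \<Rightarrow> ennreal" where
  "regret h b \<pi> F T = (\<Sum>t=1..T. \<integral>\<^sup>+ ds. ennreal (exp_cost h b F (\<pi> t ds) - opt_cost h b F)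
        \<partial>(PiM {..<t} (\<lambda>_. F)))"

end

theory Submission
  imports Defs
begin


lemma unif_prob:
  assumes "0 \<le> \<theta>" "\<theta> < 1"
  shows "prob_space (unif_dist \<theta>)"
  unfolding unif_dist_def using assms
  by (intro prob_space_uniform_measure) auto

lemma unif_measure_Icc:
  assumes "0 \<le> \<theta>" "\<theta> < 1" "A \<in> sets borel"
  shows "measure (unif_dist \<theta>) A = measure lborel ({\<theta>..1} \<inter> A) / (1 - \<theta>)"
  unfolding unif_dist_def using assms
  by (subst measure_uniform_measure) auto

lemma unif_integrable:
  assumes "0 \<le> \<theta>" "\<theta> < 1" and f[measurable]: "f \<in> borel_measurable borel"
    and bd: "\<And>d. d \<in> {\<theta>..1} \<Longrightarrow> \<bar>f d\<bar> \<le> B"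
  shows "integrable (unif_dist \<theta>) (f :: real \<Rightarrow> real)"
proof -
  interpret prob_space "unif_dist \<theta>" using unif_prob assms by blast
  show ?thesis
  proof (rule integrable_const_bound[where B=B])
    show "AE x in unif_dist \<theta>. norm (f x) \<le> B"
      unfolding unif_dist_def by (rule AE_uniform_measureI) (auto intro!: AE_I2 bd)
    show "f \<in> borel_measurable (unif_dist \<theta>)" unfolding unif_dist_def by simp
  qed
qed

lemma nv_integrable:
  assumes "0 \<le> \<theta>" "\<theta> < 1"
  shows "integrable (unif_dist \<theta>) (nv_cost h b x)"
proof (rule unif_integrable[OF assms, where B="\<bar>h\<bar> * (\<bar>x\<bar> + 1) + \<bar>b\<bar> * (\<bar>x\<bar> + 1)"])
  show "nv_cost h b x \<in> borel_measurable borel" unfolding nv_cost_def by measurable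
  fix d :: real assume "d \<in> {\<theta>..1}"
  hence d: "\<bar>d\<bar> \<le> 1" using assms by auto
  have a1: "\<bar>max (x - d) 0\<bar> \<le> \<bar>x\<bar> + 1" and a2: "\<bar>max (d - x) 0\<bar> \<le> \<bar>x\<bar> + 1" using d by auto
  have "\<bar>nv_cost h b x d\<bar> \<le> \<bar>h * max (x - d) 0\<bar> + \<bar>b * max (d - x) 0\<bar>"
    unfolding nv_cost_def by (rule abs_triangle_ineq)
  also have "\<dots> = \<bar>h\<bar> * \<bar>max (x - d) 0\<bar> + \<bar>b\<bar> * \<bar>max (d - x) 0\<bar>" by (simp add: abs_mult)
  also have "\<dots> \<le> \<bar>h\<bar> * (\<bar>x\<bar> + 1) + \<bar>b\<bar> * (\<bar>x\<bar> + 1)"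
    by (intro add_mono mult_left_mono a1 a2) auto
  finally show "\<bar>nv_cost h b x d\<bar> \<le> \<bar>h\<bar> * (\<bar>x\<bar> + 1) + \<bar>b\<bar> * (\<bar>x\<bar> + 1)" .
qed

lemma p1:
  fixes h b xs y d :: real assumes h: "h > 0" and b: "b > 0"
  shows "h * max (xs - d) 0 + b * max (d - xs) 0 + (- b + (h + b) * (if d \<le> xs then 1 else 0)) * (y - xs)
     \<le> h * max (y - d) 0 + b * max (d - y) 0"
proof (cases "d \<le> xs")
  case True
  have "h * (y - d) \<le> h * max (y - d) 0" using h by (intro mult_left_mono) auto
  moreover have "0 \<le> b * max (d - y) 0" using b by simp
  ultimately show ?thesis using True by (simp add: max_def algebra_simps)
next
  case False
  have "b * (d - y) \<le> b * max (d - y) 0" using b by (intro mult_left_mono) auto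
  moreover have "0 \<le> h * max (y - d) 0" using h by simp
  ultimately show ?thesis using False by (simp add: max_def algebra_simps)
qed

lemma p2:
  fixes h b xs x d :: real assumes h: "h > 0" and b: "b > 0"
  shows "h * max (x - d) 0 + b * max (d - x) 0 \<le>
     h * max (xs - d) 0 + b * max (d - xs) 0 + (- b + (h + b) * (if d \<le> xs then 1 else 0)) * (x - xs)
     + (h + b) * \<bar>x - xs\<bar> * (if d \<in> {min x xs..max x xs} then 1 else 0)"
proof -
  have hb: "0 \<le> h + b" using h b by simp
  have z: "0 \<le> (h + b) * \<bar>x - xs\<bar> * (if d \<in> {min x xs..max x xs} then 1 else 0)" using hb by simp
  consider "d \<le> xs" "d \<le> x" | "d \<le> xs" "x < d" | "xs < d" "d \<le> x" | "xs < d" "x < d" by linarith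
  then show ?thesis
  proof cases
    case 1
    then have "h * max (x - d) 0 + b * max (d - x) 0 =
     h * max (xs - d) 0 + b * max (d - xs) 0 + (- b + (h + b) * (if d \<le> xs then 1 else 0)) * (x - xs)"
      by (simp add: max_def algebra_simps)
    then show ?thesis using z by linarith
  next
    case 2
    have "(h + b) * (d - x) \<le> (h + b) * \<bar>x - xs\<bar>" using 2 hb by (intro mult_left_mono) auto
    then show ?thesis using 2 by (simp add: max_def algebra_simps)
  next
    case 3
    have "(h + b) * (x - d) \<le> (h + b) * \<bar>x - xs\<bar>" using 3 hb by (intro mult_left_mono) auto
    then show ?thesis using 3 by (simp add: max_def algebra_simps)
  next
    case 4
    then have "h * max (x - d) 0 + b * max (d - x) 0 =
     h * max (xs - d) 0 + b * max (d - xs) 0 + (- b + (h + b) * (if d \<le> xs then 1 else 0)) * (x - xs)"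
      by (simp add: max_def algebra_simps)
    then show ?thesis using z by linarith
  qed
qed

lemma p1':
  fixes h b xs y d :: real assumes h: "h > 0" and b: "b > 0"
  shows "nv_cost h b xs d + (- b + (h + b) * indicator {..xs} d) * (y - xs) \<le> nv_cost h b y d"
  using p1[OF h b, of xs d y] by (cases "d \<le> xs") (simp_all add: nv_cost_def)

lemma p2':
  fixes h b xs x d :: real assumes h: "h > 0" and b: "b > 0"
  shows "nv_cost h b x d \<le> nv_cost h b xs d + (- b + (h + b) * indicator {..xs} d) * (x - xs)
     + (h + b) * \<bar>x - xs\<bar> * indicator {min x xs..max x xs} d"
proof -
  have e1: "indicator {..xs} d = (if d \<le> xs then 1 else (0::real))" by (simp add: indicator_def)
  have e2: "indicator {min x xs..max x xs} d = (if d \<in> {min x xs..max x xs} then 1 else (0::real))"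
    by (simp only: indicator_def of_bool_def)
  show ?thesis unfolding e1 e2 nv_cost_def using p2[OF h b, of x d xs] by simp
qed

lemma cost_bound:
  assumes h: "h > 0" and b: "b > 0" and th: "0 \<le> \<theta>" "\<theta> < 1"
  defines "\<rho> \<equiv> b / (h + b)"
  defines "xs \<equiv> \<theta> + \<rho> * (1 - \<theta>)"
  shows "exp_cost h b (unif_dist \<theta>) x - opt_cost h b (unif_dist \<theta>)
           \<le> (h + b) * (x - xs)\<^sup>2 / (1 - \<theta>)"
proof -
  let ?F = "unif_dist \<theta>"
  let ?L = "1 - \<theta>"
  interpret prob_space ?F using unif_prob th by blast
  have L: "?L > 0" using th by simp
  have rho: "0 < \<rho>" "\<rho> < 1" using h b unfolding \<rho>_def by auto
  have "\<rho> * (1 - \<theta>) \<le> 1 * (1 - \<theta>)" using rho L by (intro mult_right_mono) auto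
  moreover have "0 \<le> \<rho> * (1 - \<theta>)" using rho L by simp
  ultimately have xs1: "\<theta> \<le> xs" "xs \<le> 1" unfolding xs_def by auto
  define s where "s = (\<lambda>d::real. - b + (h + b) * indicator {..xs} d)"
  have [measurable]: "s \<in> borel_measurable borel" unfolding s_def by measurable
  have s_int: "integrable ?F s"
    by (rule unif_integrable[OF th, where B="b + (h+b)"]) (use h b in \<open>auto simp: s_def indicator_def\<close>)
  have "{\<theta>..1} \<inter> {..xs} = {\<theta>..xs}" using xs1 by auto
  hence "measure ?F {..xs} = \<rho>"
    using xs1 th L by (simp add: unif_measure_Icc xs_def)
  moreover have "integral\<^sup>L ?F s = - b + (h + b) * measure ?F {..xs}"
  proof -
    have sp: "space ?F = UNIV" by (simp add: unif_dist_def)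
    have ii: "integrable ?F (indicat_real {..xs})"
      by (rule unif_integrable[OF th, where B=1]) auto
    have "integral\<^sup>L ?F (\<lambda>d. - b + (h + b) * indicator {..xs} d) =
        integral\<^sup>L ?F (\<lambda>d. - b) + integral\<^sup>L ?F (\<lambda>d. (h + b) * indicator {..xs} d)"
      by (rule Bochner_Integration.integral_add) (use ii in auto)
    also have "\<dots> = - b + (h + b) * measure ?F {..xs}"
      using prob_space sp by simp
    finally show ?thesis by (simp add: s_def)
  qed
  ultimately have Es: "integral\<^sup>L ?F s = 0"
    using h b by (simp add: \<rho>_def)
  have sp: "space ?F = UNIV" by (simp add: unif_dist_def)
  have p1: "nv_cost h b xs d + s d * (y - xs) \<le> nv_cost h b y d" for y d
    using p1'[OF h b] unfolding s_def by simp
  have lowC: "exp_cost h b ?F xs \<le> exp_cost h b ?F y" for y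
  proof -
    have "integral\<^sup>L ?F (\<lambda>d. nv_cost h b xs d + s d * (y - xs))
        = integral\<^sup>L ?F (nv_cost h b xs) + integral\<^sup>L ?F (\<lambda>d. s d * (y - xs))"
      by (rule Bochner_Integration.integral_add) (use s_int nv_integrable[OF th] in auto)
    also have "integral\<^sup>L ?F (\<lambda>d. s d * (y - xs)) = integral\<^sup>L ?F s * (y - xs)"
      by (rule integral_mult_left_zero)
    finally have "exp_cost h b ?F xs = integral\<^sup>L ?F (\<lambda>d. nv_cost h b xs d + s d * (y - xs))"
      using Es unfolding exp_cost_def by simp
    also have "\<dots> \<le> exp_cost h b ?F y" unfolding exp_cost_def
      by (rule integral_mono) (use p1 s_int nv_integrable[OF th] in auto)
    finally show ?thesis .
  qed
  have opt: "exp_cost h b ?F xs \<le> opt_cost h b ?F"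
    unfolding opt_cost_def by (rule cINF_greatest) (auto intro: lowC)
  define c where "c = (h + b) * \<bar>x - xs\<bar>"
  define I where "I = {min x xs..max x xs}"
  have p2: "nv_cost h b x d \<le> nv_cost h b xs d + s d * (x - xs) + c * indicator I d" for d
    using p2'[OF h b, where x=x and xs=xs and d=d] unfolding s_def c_def I_def by (simp add: mult.assoc)
  have iI: "integrable ?F (\<lambda>d. c * indicat_real I d)"
    by (rule unif_integrable[OF th, where B="\<bar>c\<bar>"]) (auto simp: I_def indicator_def)
  have mI: "measure ?F I \<le> \<bar>x - xs\<bar> / ?L"
  proof -
    have "measure ?F I = measure lborel ({\<theta>..1} \<inter> I) / ?L"
      using th by (simp add: unif_measure_Icc I_def)
    also have "measure lborel ({\<theta>..1} \<inter> I) \<le> \<bar>x - xs\<bar>"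
    proof -
      have "measure lborel ({\<theta>..1} \<inter> I) \<le> measure lborel I"
        by (rule measure_mono_fmeasurable) (auto simp: I_def intro: fmeasurable_compact)
      also have "measure lborel I = \<bar>x - xs\<bar>" unfolding I_def by (simp add: max_def min_def)
      finally show ?thesis .
    qed
    finally show ?thesis using L by (simp add: divide_right_mono)
  qed
  have "exp_cost h b ?F x \<le> integral\<^sup>L ?F (\<lambda>d. nv_cost h b xs d + s d * (x - xs) + c * indicator I d)"
    unfolding exp_cost_def
    by (rule integral_mono) (use p2 s_int nv_integrable[OF th] iI in auto)
  also have "\<dots> = exp_cost h b ?F xs + c * measure ?F I"
  proof -
    have "integral\<^sup>L ?F (\<lambda>d. nv_cost h b xs d + s d * (x - xs) + c * indicator I d)
        = integral\<^sup>L ?F (\<lambda>d. nv_cost h b xs d + s d * (x - xs)) + integral\<^sup>L ?F (\<lambda>d. c * indicator I d)"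
      by (rule Bochner_Integration.integral_add) (use s_int nv_integrable[OF th] iI in auto)
    also have "integral\<^sup>L ?F (\<lambda>d. nv_cost h b xs d + s d * (x - xs))
        = integral\<^sup>L ?F (nv_cost h b xs) + integral\<^sup>L ?F (\<lambda>d. s d * (x - xs))"
      by (rule Bochner_Integration.integral_add) (use s_int nv_integrable[OF th] in auto)
    also have "integral\<^sup>L ?F (\<lambda>d. s d * (x - xs)) = integral\<^sup>L ?F s * (x - xs)"
      by (rule integral_mult_left_zero)
    also have "integral\<^sup>L ?F (\<lambda>d. c * indicator I d) = c * measure ?F I"
      using sp by simp
    finally show ?thesis using Es unfolding exp_cost_def by simp
  qed
  also have "\<dots> \<le> exp_cost h b ?F xs + c * (\<bar>x - xs\<bar> / ?L)"
  proof -
    have "c \<ge> 0" using h b by (simp add: c_def)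
    then show ?thesis using mult_left_mono[OF mI, of c] by simp
  qed
  also have "c * (\<bar>x - xs\<bar> / ?L) = (h + b) * (x - xs)\<^sup>2 / ?L"
    by (simp add: c_def power2_eq_square mult.assoc)
  finally show ?thesis using opt by linarith
qed


fun mn :: "nat \<Rightarrow> (nat \<Rightarrow> real) \<Rightarrow> real" where
  "mn 0 ds = 1"
| "mn (Suc t) ds = min (mn t ds) (ds t)"

lemma mn_ge_iff: "a \<le> mn t ds \<longleftrightarrow> a \<le> 1 \<and> (\<forall>i<t. a \<le> ds i)"
  by (induction t) (auto simp: less_Suc_eq)

lemma mn_meas:
  assumes "sets M = sets borel"
  shows "k \<le> t \<Longrightarrow> mn k \<in> borel_measurable (PiM {..<t} (\<lambda>_. M))"
proof (induction k)
  case 0 then show ?case by simp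
next
  case (Suc k)
  have "(\<lambda>ds. ds k) \<in> measurable (PiM {..<t} (\<lambda>_. M)) M"
    using Suc.prems by (intro measurable_component_singleton) auto
  hence c: "(\<lambda>ds. ds k) \<in> borel_measurable (PiM {..<t} (\<lambda>_. M))"
    using assms measurable_cong_sets by blast
  have "mn k \<in> borel_measurable (PiM {..<t} (\<lambda>_. M))" using Suc by simp
  then show ?case using c by simp
qed

lemma ftc_sq:
  assumes "0 \<le> y"
  shows "(\<integral>\<^sup>+s. ennreal (2 * s) * indicator {0..y} s \<partial>lborel) = ennreal (y\<^sup>2)"
proof -
  have "(\<integral>\<^sup>+s. ennreal (2 * s) * indicator {0..y} s \<partial>lborel) = ennreal ((\<lambda>s. s\<^sup>2) y - (\<lambda>s. s\<^sup>2) 0)"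
    by (rule nn_integral_FTC_Icc) (auto intro!: derivative_eq_intros simp: assms)
  then show ?thesis by simp
qed

lemma ftc_tail:
  fixes L :: real and t :: nat
  assumes L: "L > 0"
  shows "(\<integral>\<^sup>+s. ennreal (2 * s * (L - s) ^ t / L ^ t) * indicator {0..L} s \<partial>lborel)
     = ennreal (2 * L\<^sup>2 / ((t + 1) * (t + 2)))"
proof -
  define a1 :: real where "a1 = 1 / (t + 1)"
  define a2 :: real where "a2 = 1 / ((t + 1) * (t + 2))"
  define c0 :: real where "c0 = - 2 / L ^ t"
  have pp: "0 < (real t + 1) * (real t + 2)" by (intro mult_pos_pos) auto
  have "0 \<le> real t * real t" by simp
  hence nz: "2 + (real t * real t + real t * 3) \<noteq> 0" "2 + (3 * real t + real t * real t) \<noteq> 0" by linarith+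
  have a1e: "a1 * (t + 1) = 1" unfolding a1_def by auto
  have a2e: "a2 * ((t + 1) * (t + 2)) = 1" unfolding a2_def using pp by (metis less_irrefl nonzero_divide_eq_eq of_nat_1 of_nat_add of_nat_mult one_add_one)
  define G where "G s = c0 * (s * (L - s) ^ Suc t * a1 + (L - s) ^ Suc (Suc t) * a2)" for s
  have "(\<integral>\<^sup>+s. ennreal (2 * s * (L - s) ^ t / L ^ t) * indicator {0..L} s \<partial>lborel) = ennreal (G L - G 0)"
  proof (rule nn_integral_FTC_Icc)
    show "(\<lambda>s. 2 * s * (L - s) ^ t / L ^ t) \<in> borel_measurable borel" by measurable
    show "0 \<le> L" using L by simp
    fix s assume s: "s \<in> {0..L}"
    show "0 \<le> 2 * s * (L - s) ^ t / L ^ t" using s L by simp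
    have d: "(G has_real_derivative c0 * ((L - s) ^ Suc t * a1 - s * ((Suc t) * (L - s) ^ t) * a1
         - (Suc (Suc t)) * (L - s) ^ Suc t * a2)) (at s)"
      unfolding G_def[abs_def]
      by (rule DERIV_cong, (rule derivative_eq_intros refl)+) (simp add: algebra_simps)
    have "c0 * ((L - s) ^ Suc t * a1 - s * ((Suc t) * (L - s) ^ t) * a1
         - (Suc (Suc t)) * (L - s) ^ Suc t * a2) = c0 * (- s * (L - s) ^ t)"
    proof -
      have e1: "real (Suc t) * a1 = 1" using a1e by (simp add: algebra_simps)
      have e2: "real (Suc (Suc t)) * a2 = a1" unfolding a1_def a2_def using nz by (simp add: field_simps)
      have "(L - s) ^ Suc t * a1 - s * ((Suc t) * (L - s) ^ t) * a1 - (Suc (Suc t)) * (L - s) ^ Suc t * a2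
         = (L - s) ^ Suc t * a1 - s * (L - s) ^ t * (real (Suc t) * a1) - (L - s) ^ Suc t * (real (Suc (Suc t)) * a2)"
        by (simp only: mult_ac)
      also have "\<dots> = - s * (L - s) ^ t" by (simp only: e1 e2)
      finally show ?thesis by simp
    qed
    also have "\<dots> = 2 * s * (L - s) ^ t / L ^ t" using L by (simp add: c0_def)
    finally show "(G has_real_derivative 2 * s * (L - s) ^ t / L ^ t) (at s)" using d by simp
  qed
  also have "G L - G 0 = 2 * L\<^sup>2 / ((t + 1) * (t + 2))"
    using L nz by (simp add: G_def c0_def a2_def field_simps power2_eq_square)
  finally show ?thesis .
qed

lemma E_min_sq:
  assumes th: "0 \<le> \<theta>" "\<theta> < 1" and t: "t \<ge> 1"
  shows "(\<integral>\<^sup>+ds. ennreal ((mn t ds - \<theta>)\<^sup>2) \<partial>PiM {..<t} (\<lambda>_. unif_dist \<theta>))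
     = ennreal (2 * (1 - \<theta>)\<^sup>2 / ((t + 1) * (t + 2)))"
proof -
  let ?F = "unif_dist \<theta>"
  let ?M = "PiM {..<t} (\<lambda>_. ?F)"
  define L where "L = 1 - \<theta>"
  have L: "L > 0" using th by (simp add: L_def)
  interpret F: prob_space ?F using unif_prob th by blast
  have sF: "sets ?F = sets borel" by (simp add: unif_dist_def)
  have spF: "space ?F = UNIV" by (simp add: unif_dist_def)
  interpret M: prob_space ?M by (rule prob_space_PiM) (use unif_prob th in auto)
  interpret P: pair_sigma_finite ?M lborel
    unfolding pair_sigma_finite_def using M.sigma_finite_measure_axioms lborel.sigma_finite_measure_axioms by auto
  interpret PS: product_sigma_finite "\<lambda>_::nat. ?F"
    unfolding product_sigma_finite_def using F.sigma_finite_measure_axioms by auto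
  have mm[measurable]: "mn t \<in> borel_measurable ?M" using mn_meas[OF sF] by simp
  define f where "f ds s = (if 0 \<le> s \<and> s \<le> mn t ds - \<theta> then ennreal (2 * s) else 0)" for ds s
  have AEm: "AE ds in ?M. \<theta> \<le> mn t ds"
  proof -
    have "AE ds in ?M. \<forall>i\<in>{..<t}. \<theta> \<le> ds i"
    proof (rule AE_finite_allI)
      fix i assume i: "i \<in> {..<t}"
      have "AE x in ?F. \<theta> \<le> x" unfolding unif_dist_def by (rule AE_uniform_measureI) auto
      moreover have "\<And>j. j \<in> {..<t} \<Longrightarrow> prob_space ?F" using unif_prob th by blast
      ultimately show "AE ds in ?M. \<theta> \<le> ds i"
        using AE_PiM_component[where M="\<lambda>_. ?F" and I="{..<t}" and i=i and P="\<lambda>x. \<theta> \<le> x"] i by blast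
    qed simp
    then show ?thesis by eventually_elim (use th in \<open>auto simp: mn_ge_iff\<close>)
  qed
  have step1: "(\<integral>\<^sup>+ds. ennreal ((mn t ds - \<theta>)\<^sup>2) \<partial>?M) = (\<integral>\<^sup>+ds. (\<integral>\<^sup>+s. f ds s \<partial>lborel) \<partial>?M)"
  proof (rule nn_integral_cong_AE)
    show "AE ds in ?M. ennreal ((mn t ds - \<theta>)\<^sup>2) = (\<integral>\<^sup>+s. f ds s \<partial>lborel)"
      using AEm
    proof eventually_elim
      fix ds assume "\<theta> \<le> mn t ds"
      hence y: "0 \<le> mn t ds - \<theta>" by simp
      have "(\<integral>\<^sup>+s. f ds s \<partial>lborel) = (\<integral>\<^sup>+s. ennreal (2 * s) * indicator {0..mn t ds - \<theta>} s \<partial>lborel)"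
        by (rule nn_integral_cong) (auto simp: f_def indicator_def)
      also have "\<dots> = ennreal ((mn t ds - \<theta>)\<^sup>2)" by (rule ftc_sq[OF y])
      finally show "ennreal ((mn t ds - \<theta>)\<^sup>2) = (\<integral>\<^sup>+s. f ds s \<partial>lborel)" by simp
    qed
  qed
  have meas: "case_prod f \<in> borel_measurable (?M \<Otimes>\<^sub>M lborel)" unfolding f_def by measurable
  have step2: "(\<integral>\<^sup>+ds. (\<integral>\<^sup>+s. f ds s \<partial>lborel) \<partial>?M) = (\<integral>\<^sup>+s. (\<integral>\<^sup>+ds. f ds s \<partial>?M) \<partial>lborel)"
    using P.Fubini'[OF meas] by simp
  have step3: "(\<integral>\<^sup>+ds. f ds s \<partial>?M) = ennreal (2 * s * (L - s) ^ t / L ^ t) * indicator {0..L} s" for s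
  proof (cases "0 \<le> s")
    case False
    then show ?thesis by (simp add: f_def)
  next
    case s: True
    have "(\<integral>\<^sup>+ds. f ds s \<partial>?M) = (\<integral>\<^sup>+ds. ennreal (2 * s) * indicator {ds\<in>space ?M. \<theta> + s \<le> mn t ds} ds \<partial>?M)"
      by (rule nn_integral_cong) (use s in \<open>auto simp: f_def indicator_def\<close>)
    also have "\<dots> = ennreal (2 * s) * emeasure ?M {ds\<in>space ?M. \<theta> + s \<le> mn t ds}"
      by (rule nn_integral_cmult_indicator) measurable
    also have "\<dots> = ennreal (2 * s * (L - s) ^ t / L ^ t) * indicator {0..L} s"
    proof (cases "s \<le> L")
      case True
      have eqs: "{ds\<in>space ?M. \<theta> + s \<le> mn t ds} = PiE {..<t} (\<lambda>_. {\<theta> + s..})"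
        using True by (auto simp: mn_ge_iff space_PiM spF PiE_def extensional_def L_def)
      have eF: "emeasure ?F {\<theta> + s..} = ennreal ((L - s) / L)"
      proof -
        have "{\<theta>..1} \<inter> {\<theta> + s..} = {\<theta> + s..1}" using s by auto
        then have "emeasure ?F {\<theta> + s..} = emeasure lborel {\<theta> + s..1} / emeasure lborel {\<theta>..1}"
          unfolding unif_dist_def by (subst emeasure_uniform_measure) auto
        also have "\<dots> = ennreal (L - s) / ennreal L"
          using True th by (simp add: L_def diff_diff_eq)
        also have "\<dots> = ennreal ((L - s) / L)" using True L by (simp add: divide_ennreal)
        finally show ?thesis .
      qed
      have "emeasure ?M {ds\<in>space ?M. \<theta> + s \<le> mn t ds} = (\<Prod>i\<in>{..<t}. emeasure ?F {\<theta> + s..})"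
        unfolding eqs by (rule PS.emeasure_PiM) (auto simp: sF)
      also have "\<dots> = ennreal (((L - s) / L) ^ t)" using eF True L by (simp add: ennreal_power)
      finally show ?thesis using True s L
        by (simp add: ennreal_mult[symmetric] power_divide)
    next
      case False
      have eqs: "{ds\<in>space ?M. \<theta> + s \<le> mn t ds} = {}"
        using False by (auto simp: mn_ge_iff L_def)
      show ?thesis using False by (simp add: eqs)
    qed
    finally show ?thesis .
  qed
  show ?thesis
    unfolding step1 step2 step3 using ftc_tail[OF L, of t] by (simp add: L_def)
qed

definition pol :: "real \<Rightarrow> nat \<Rightarrow> (nat \<Rightarrow> real) \<Rightarrow> real" where
  "pol \<rho> t ds = mn t ds + \<rho> * (1 - mn t ds)"

lemma pol_adm: "admissible (pol \<rho>)"
  unfolding admissible_def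
proof (intro allI impI)
  fix t :: nat
  have [measurable]: "mn t \<in> borel_measurable (PiM {..<t} (\<lambda>_. borel))" using mn_meas[of borel t t] by simp
  show "pol \<rho> t \<in> borel_measurable (PiM {..<t} (\<lambda>_. borel))" unfolding pol_def by measurable
qed

lemma per_t:
  assumes h: "h > 0" and b: "b > 0" and th: "0 \<le> \<theta>" "\<theta> < 1" and t: "t \<ge> 1"
  defines "\<rho> \<equiv> b / (h + b)"
  shows "(\<integral>\<^sup>+ds. ennreal (exp_cost h b (unif_dist \<theta>) (pol \<rho> t ds) - opt_cost h b (unif_dist \<theta>))
            \<partial>PiM {..<t} (\<lambda>_. unif_dist \<theta>))
       \<le> ennreal ((h + b) * (1 - \<rho>)\<^sup>2 / (1 - \<theta>) * (2 * (1 - \<theta>)\<^sup>2 / ((t + 1) * (t + 2))))"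
proof -
  let ?F = "unif_dist \<theta>"
  let ?M = "PiM {..<t} (\<lambda>_. ?F)"
  define K where "K = (h + b) * (1 - \<rho>)\<^sup>2 / (1 - \<theta>)"
  have K: "K \<ge> 0" using h b th by (simp add: K_def)
  have sF: "sets ?F = sets borel" by (simp add: unif_dist_def)
  have mm[measurable]: "mn t \<in> borel_measurable ?M" using mn_meas[OF sF] by simp
  have pw: "exp_cost h b ?F (pol \<rho> t ds) - opt_cost h b ?F \<le> K * (mn t ds - \<theta>)\<^sup>2" for ds
  proof -
    have "exp_cost h b ?F (pol \<rho> t ds) - opt_cost h b ?F
        \<le> (h + b) * (pol \<rho> t ds - (\<theta> + \<rho> * (1 - \<theta>)))\<^sup>2 / (1 - \<theta>)"
      using cost_bound[OF h b th, of "pol \<rho> t ds"] unfolding \<rho>_def by simp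
    also have "pol \<rho> t ds - (\<theta> + \<rho> * (1 - \<theta>)) = (1 - \<rho>) * (mn t ds - \<theta>)"
      unfolding pol_def by (simp add: algebra_simps)
    also have "(h + b) * ((1 - \<rho>) * (mn t ds - \<theta>))\<^sup>2 / (1 - \<theta>) = K * (mn t ds - \<theta>)\<^sup>2"
      unfolding K_def by (simp add: power_mult_distrib)
    finally show ?thesis .
  qed
  have "(\<integral>\<^sup>+ds. ennreal (exp_cost h b ?F (pol \<rho> t ds) - opt_cost h b ?F) \<partial>?M)
      \<le> (\<integral>\<^sup>+ds. ennreal K * ennreal ((mn t ds - \<theta>)\<^sup>2) \<partial>?M)"
    by (rule nn_integral_mono) (use pw K in \<open>auto simp: ennreal_mult[symmetric] intro: ennreal_leI\<close>)
  also have "\<dots> = ennreal K * (\<integral>\<^sup>+ds. ennreal ((mn t ds - \<theta>)\<^sup>2) \<partial>?M)"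
    by (rule nn_integral_cmult) measurable
  also have "\<dots> = ennreal K * ennreal (2 * (1 - \<theta>)\<^sup>2 / ((t + 1) * (t + 2)))"
    using E_min_sq[OF th t] by simp
  also have "\<dots> = ennreal (K * (2 * (1 - \<theta>)\<^sup>2 / ((t + 1) * (t + 2))))"
    by (rule ennreal_mult[symmetric]) (use K in auto)
  finally show ?thesis unfolding K_def .
qed

lemma tele: "(\<Sum>t=1..T. 1 / ((real t + 1) * (real t + 2))) = 1/2 - 1 / (real T + 2)"
proof (induction T)
  case 0 then show ?case by simp
next
  case (Suc T)
  have "(\<Sum>t=1..Suc T. 1 / ((real t + 1) * (real t + 2))) =
        (\<Sum>t=1..T. 1 / ((real t + 1) * (real t + 2))) + 1 / ((real T + 2) * (real T + 3))"
    by (simp add: add.commute)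
  also have "\<dots> = 1/2 - 1 / (real (Suc T) + 2)"
  proof -
    have p: "real T + 2 \<noteq> 0" "real T + 3 \<noteq> 0" by linarith+
    have "1 / (real T + 2) - 1 / (real T + 3) = ((real T + 3) - (real T + 2)) / ((real T + 2) * (real T + 3))"
      using p by (simp add: diff_frac_eq)
    then have "1 / ((real T + 2) * (real T + 3)) = 1 / (real T + 2) - 1 / (real T + 3)" by simp
    then show ?thesis unfolding Suc.IH by (simp add: add.commute)
  qed
  finally show ?case .
qed

theorem theoremD2:
  fixes h b :: real and T :: nat
  assumes "h > 0" and "b > 0" and "T \<ge> 1"
  shows "(INF \<pi>\<in>{\<pi>. admissible \<pi>}. SUP \<theta>\<in>{0..1/2}. regret h b \<pi> (unif_dist \<theta>) T)
           \<le> ennreal (((b/(h+b))\<^sup>2 + (1 - b/(h+b))\<^sup>2) * (h + b))"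
proof -
  define \<rho> where "\<rho> = b / (h + b)"
  have h: "h > 0" and b: "b > 0" using assms by auto
  have rho: "0 < \<rho>" "\<rho> < 1" using h b unfolding \<rho>_def by auto
  have "(INF \<pi>\<in>{\<pi>. admissible \<pi>}. SUP \<theta>\<in>{0..1/2}. regret h b \<pi> (unif_dist \<theta>) T)
      \<le> (SUP \<theta>\<in>{0..1/2}. regret h b (pol \<rho>) (unif_dist \<theta>) T)"
    by (rule INF_lower) (simp add: pol_adm)
  also have "\<dots> \<le> ennreal ((\<rho>\<^sup>2 + (1 - \<rho>)\<^sup>2) * (h + b))"
  proof (rule SUP_least)
    fix \<theta> :: real assume "\<theta> \<in> {0..1/2}"
    hence th: "0 \<le> \<theta>" "\<theta> < 1" "\<theta> \<le> 1/2" by auto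
    define L where "L = 1 - \<theta>"
    have L: "0 < L" "L \<le> 1" using th by (auto simp: L_def)
    define c where "c t = (h + b) * (1 - \<rho>)\<^sup>2 / (1 - \<theta>) * (2 * (1 - \<theta>)\<^sup>2 / ((t + 1) * (t + 2)))" for t :: nat
    have c_nn: "c t \<ge> 0" for t using h b th by (simp add: c_def)
    have "regret h b (pol \<rho>) (unif_dist \<theta>) T \<le> (\<Sum>t=1..T. ennreal (c t))"
      unfolding regret_def c_def
      by (rule sum_mono) (use per_t[OF h b th(1,2)] in \<open>auto simp: \<rho>_def\<close>)
    also have "\<dots> = ennreal (\<Sum>t=1..T. c t)" using c_nn by simp
    also have "\<dots> \<le> ennreal ((\<rho>\<^sup>2 + (1 - \<rho>)\<^sup>2) * (h + b))"
    proof (rule ennreal_leI)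
      have gen: "A / L * (2 * L\<^sup>2 / D) = 2 * (A * L) * (1 / D)" for A D :: real
        using L by (simp add: power2_eq_square)
      have cc: "c t = 2 * ((h + b) * (1 - \<rho>)\<^sup>2 * L) * (1 / ((real t + 1) * (real t + 2)))" for t
      proof -
        have "real ((t + 1) * (t + 2)) = (real t + 1) * (real t + 2)" by (simp add: algebra_simps)
        then show ?thesis unfolding c_def L_def[symmetric] gen[symmetric] by simp
      qed
      have "(\<Sum>t=1..T. c t) = 2 * ((h + b) * (1 - \<rho>)\<^sup>2 * L) * (1/2 - 1 / (real T + 2))"
        unfolding cc by (subst sum_distrib_left[symmetric]) (simp only: tele)
      also have "\<dots> \<le> 2 * ((h + b) * (1 - \<rho>)\<^sup>2 * L) * (1/2)"
        using h b L by (intro mult_left_mono) auto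
      also have "\<dots> = (h + b) * (1 - \<rho>)\<^sup>2 * L" by simp
      also have "\<dots> \<le> (h + b) * (1 - \<rho>)\<^sup>2 * 1"
        using h b L by (intro mult_left_mono) auto
      also have "\<dots> \<le> (\<rho>\<^sup>2 + (1 - \<rho>)\<^sup>2) * (h + b)"
        using h b by (simp add: algebra_simps)
      finally show "(\<Sum>t=1..T. c t) \<le> (\<rho>\<^sup>2 + (1 - \<rho>)\<^sup>2) * (h + b)" .
    qed
    finally show "regret h b (pol \<rho>) (unif_dist \<theta>) T \<le> ennreal ((\<rho>\<^sup>2 + (1 - \<rho>)\<^sup>2) * (h + b))" .
  qed
  finally show ?thesis unfolding \<rho>_def .
qed

end
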